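(* Let $G$ be the $m\times n$ square lattice graph $P_m\times P_n$ with $m,n>2$ and $\{m,n\}\notin\{\{3,3\},\{3,5\},\{4,4\}\}$. Then $T_1(G)=4$.
   Context: $P_m\times P_n$ is the Cartesian product of paths on $m$ and $n$ vertices. Fix a set $\Sigma$ of symbols (bond-edge types) and a disjoint copy $\hat\Sigma=\{\hat a:a\in\Sigma\}$ with $\hat{\hat a}=a$; elements of $\Sigma\cup\hat\Sigma$ are cohesive-end types. A tile is a finite multiset of cohesive-end types. A pot is a finite set $P$ of tiles such that whenever $x$ occurs in a tile of $P$, $\hat x$ occurs in some tile of $P$; $\#P$ is its number of tiles. Graphs are finite, loops and multiple edges allowed. An assembly design of a graph $H$ labels the half-edges of $H$ by cohesive-end types so that the two half-edges of each edge receive complementary labels $x,\hat x$; $t_v$ is the multiset of labels at $v$, $P_\lambda(H)=\{t_v\}$, and $P$ realizes $H$ ($H\in\mathcal{O}(P)$) if some assembly design $\lambda$ has $P_\lambda(H)\subseteq P$. $T_1(G)=\min\{\#P: G\in\mathcal{O}(P)\}$. *)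

theory Defs
  imports Main "HOL-Library.Multiset"
begin

datatype 'a cet = Sym 'a | Hat 'a

fun comp :: "'a cet \<Rightarrow> 'a cet" where
  "comp (Sym a) = Hat a"
| "comp (Hat a) = Sym a"

type_synonym 'a tile = "'a cet multiset"

definition pot :: "'a tile set \<Rightarrow> bool" where
  "pot P \<longleftrightarrow> finite P \<and> (\<forall>t\<in>P. \<forall>x. x \<in># t \<longrightarrow> (\<exists>t'\<in>P. comp x \<in># t'))"

text \<open>A finite multigraph (loops and multiple edges allowed): vertex set V, edge set E,
  and each edge e has endpoints ends e = (u,v). Its half-edges are (e,False) at u and (e,True) at v.\<close>
definition multigraph :: "'v set \<Rightarrow> 'e set \<Rightarrow> ('e \<Rightarrow> 'v \<times> 'v) \<Rightarrow> bool" where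
  "multigraph V E ends \<longleftrightarrow> finite V \<and> finite E \<and> (\<forall>e\<in>E. fst (ends e) \<in> V \<and> snd (ends e) \<in> V)"

definition assembly_design :: "'e set \<Rightarrow> ('e \<times> bool \<Rightarrow> 'a cet) \<Rightarrow> bool" where
  "assembly_design E lam \<longleftrightarrow> (\<forall>e\<in>E. lam (e, True) = comp (lam (e, False)))"

definition tile_at :: "'e set \<Rightarrow> ('e \<Rightarrow> 'v \<times> 'v) \<Rightarrow> ('e \<times> bool \<Rightarrow> 'a cet) \<Rightarrow> 'v \<Rightarrow> 'a tile" where
  "tile_at E ends lam v =
     (\<Sum>e\<in>E. (if fst (ends e) = v then {#lam (e, False)#} else {#})
            + (if snd (ends e) = v then {#lam (e, True)#} else {#}))"

definition pot_of_design :: "'v set \<Rightarrow> 'e set \<Rightarrow> ('e \<Rightarrow> 'v \<times> 'v) \<Rightarrow> ('e \<times> bool \<Rightarrow> 'a cet) \<Rightarrow> 'a tile set" where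
  "pot_of_design V E ends lam = tile_at E ends lam ` V"

definition realizes :: "'a tile set \<Rightarrow> 'v set \<Rightarrow> 'e set \<Rightarrow> ('e \<Rightarrow> 'v \<times> 'v) \<Rightarrow> bool" where
  "realizes P V E ends \<longleftrightarrow>
     (\<exists>lam. assembly_design E lam \<and> pot_of_design V E ends lam \<subseteq> P)"

text \<open>T_1(G): minimum number of tiles of a pot realizing G (symbol set \<Sigma> = nat,
  which suffices since any finite design uses finitely many symbols).\<close>
definition T1 :: "'v set \<Rightarrow> 'e set \<Rightarrow> ('e \<Rightarrow> 'v \<times> 'v) \<Rightarrow> nat" where
  "T1 V E ends = Inf {card P | P :: nat tile set. pot P \<and> realizes P V E ends}"

definition grid_V :: "nat \<Rightarrow> nat \<Rightarrow> (nat \<times> nat) set" where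
  "grid_V m n = {0..<m} \<times> {0..<n}"

definition grid_E :: "nat \<Rightarrow> nat \<Rightarrow> ((nat \<times> nat) \<times> (nat \<times> nat)) set" where
  "grid_E m n = {((i,j),(i',j')). (i,j) \<in> grid_V m n \<and> (i',j') \<in> grid_V m n \<and>
                  ((i' = Suc i \<and> j' = j) \<or> (i' = i \<and> j' = Suc j))}"

end

theory Submission
  imports Defs
begin


lemma grid_E_finite: "finite (grid_E m n)"
proof -
  have "grid_E m n \<subseteq> grid_V m n \<times> grid_V m n" unfolding grid_E_def by auto
  moreover have "finite (grid_V m n)" unfolding grid_V_def by auto
  ultimately show ?thesis by (meson finite_SigmaI finite_subset)
qed

lemma grid_E_fst: "{e \<in> grid_E m n. fst e = (i,j)} =
   (if Suc i < m \<and> j < n then {((i,j),(Suc i,j))} else {}) \<union>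
   (if i < m \<and> Suc j < n then {((i,j),(i,Suc j))} else {})"
  unfolding grid_E_def grid_V_def by auto

lemma grid_E_snd: "{e \<in> grid_E m n. snd e = (i,j)} =
   (if 0 < i \<and> i < m \<and> j < n then {((i-1,j),(i,j))} else {}) \<union>
   (if 0 < j \<and> i < m \<and> j < n then {((i,j-1),(i,j))} else {})"
  unfolding grid_E_def grid_V_def by (auto, (case_tac a; auto)?) 

lemma tile_split: "finite E \<Longrightarrow> tile_at E id lam v =
   (\<Sum>e\<in>{e\<in>E. fst e = v}. {#lam (e,False)#}) + (\<Sum>e\<in>{e\<in>E. snd e = v}. {#lam (e,True)#})"
  unfolding tile_at_def by (simp add: sum.distrib sum.inter_filter)

lemma tile_grid: "tile_at (grid_E m n) id lam (i,j) =
   (if Suc i < m \<and> j < n then {#lam (((i,j),(Suc i,j)),False)#} else {#}) +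
   (if i < m \<and> Suc j < n then {#lam (((i,j),(i,Suc j)),False)#} else {#}) +
   (if 0 < i \<and> i < m \<and> j < n then {#lam (((i-1,j),(i,j)),True)#} else {#}) +
   (if 0 < j \<and> i < m \<and> j < n then {#lam (((i,j-1),(i,j)),True)#} else {#})"
  unfolding tile_split[OF grid_E_finite] grid_E_fst grid_E_snd
  by (auto simp: sum.union_disjoint)



definition Lb :: "nat \<Rightarrow> nat \<Rightarrow> (nat\<times>nat)\<times>(nat\<times>nat) \<Rightarrow> nat cet" where
  "Lb m n e = (case e of ((i,j),(i',j')) \<Rightarrow>
     if i = 0 \<and> i' = 0 then Sym 1
     else if j = n-1 \<and> j' = n-1 then Sym 1
     else if i = m-1 \<and> i' = m-1 then Hat 1
     else if j = 0 \<and> j' = 0 then Hat 1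
     else Sym 0)"

definition lamb :: "nat \<Rightarrow> nat \<Rightarrow> ((nat\<times>nat)\<times>(nat\<times>nat)) \<times> bool \<Rightarrow> nat cet" where
  "lamb m n eb = (if snd eb then comp (Lb m n (fst eb)) else Lb m n (fst eb))"

definition Pb :: "nat tile set" where
  "Pb = {{#Sym 1, Hat 1#}, {#Sym 0, Sym 1, Hat 1#}, {#Hat 0, Sym 1, Hat 1#},
         {#Sym 0, Sym 0, Hat 0, Hat 0#}}"

lemma card_Pb: "card Pb = 4"
  unfolding Pb_def
  by (auto simp: card_insert_if dest: arg_cong[where f="\<lambda>M. count M (Sym 0)"] arg_cong[where f=size])

lemma pot_Pb: "pot Pb"
  unfolding pot_def Pb_def by auto

lemma upper:
  assumes "m > 2" "n > 2"
  shows "realizes Pb (grid_V m n) (grid_E m n) id"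
  unfolding realizes_def
proof (intro exI conjI)
  show "assembly_design (grid_E m n) (lamb m n)"
    unfolding assembly_design_def lamb_def by simp
  show "pot_of_design (grid_V m n) (grid_E m n) id (lamb m n) \<subseteq> Pb"
  proof
    fix t assume "t \<in> pot_of_design (grid_V m n) (grid_E m n) id (lamb m n)"
    then obtain i j where ij: "i < m" "j < n" and t: "t = tile_at (grid_E m n) id (lamb m n) (i,j)"
      unfolding pot_of_design_def grid_V_def by auto
    show "t \<in> Pb"
      unfolding t tile_grid lamb_def Pb_def Lb_def using ij assms
      by (auto simp: add_mset_commute)
  qed
qed



lemma arith_core:
  fixes p q a b c :: int
  assumes p: "p \<ge> 1" and q: "q \<ge> 1" and a: "\<bar>a\<bar> \<le> 2" and b: "odd b" and c: "even c"
    and G: "4*a + 2*(p+q)*b + p*q*c = 0"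
    and I: "\<bar>p*q*c\<bar> \<le> 2*(p+q)"
    and C: "\<bar>2*a + p*b\<bar> \<le> p+2"
  shows "(p=1\<and>q=1) \<or> (p=1\<and>q=3) \<or> (p=3\<and>q=1) \<or> (p=2\<and>q=2) \<or> p \<noteq> 1"
proof (cases "p = 1")
  case False thus ?thesis by simp
next
  case True
  define A where "A = 2*a + b"
  define D where "D = 2*b + c"
  have AD: "2*A + q*D = 0" using G True unfolding A_def D_def by (simp add: algebra_simps)
  have Ab: "\<bar>A\<bar> \<le> 3" using C True unfolding A_def by simp
  have Aodd: "odd A" using b unfolding A_def by simp
  have Deven: "even D" using c unfolding D_def by simp
  have "A \<noteq> 0" using Aodd by auto
  hence "D \<noteq> 0" using AD by auto
  with Deven have "D \<ge> 2 \<or> D \<le> -2" by presburger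
  hence D2: "\<bar>D\<bar> \<ge> 2" by linarith
  have "2*A = -(q*D)" using AD by linarith
  hence "\<bar>2*A\<bar> = \<bar>q*D\<bar>" by simp
  hence qD: "q * \<bar>D\<bar> = 2*\<bar>A\<bar>" using q by (simp add: abs_mult)
  have "q * 2 \<le> q * \<bar>D\<bar>" using D2 q by (intro mult_left_mono) auto
  hence "q * 2 \<le> 6" using qD Ab by linarith
  hence "q \<le> 3" by simp
  moreover have "q \<noteq> 2"
  proof
    assume "q = 2"
    hence "A = - D" using AD by simp
    thus False using Aodd Deven by simp
  qed
  ultimately have "q = 1 \<or> q = 3" using q by auto
  thus ?thesis using True by auto
qed

lemma arith_main:
  fixes p q a b c :: int
  assumes p: "p \<ge> 1" and q: "q \<ge> 1" and a: "\<bar>a\<bar> \<le> 2" and b: "odd b" and c: "even c"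
    and G: "4*a + 2*(p+q)*b + p*q*c = 0"
    and I: "\<bar>p*q*c\<bar> \<le> 2*(p+q)"
    and C: "\<bar>2*a + p*b\<bar> \<le> p+2"
    and R: "\<bar>2*a + q*b\<bar> \<le> q+2"
  shows "(p=1\<and>q=1) \<or> (p=1\<and>q=3) \<or> (p=3\<and>q=1) \<or> (p=2\<and>q=2)"
proof (cases "c = 0")
  case True
  hence e: "2*a = -((p+q)*b)" using G by (simp add: algebra_simps)
  have "b \<noteq> 0" using b by auto
  hence "\<bar>b\<bar> \<ge> 1" by simp
  hence "(p+q) * 1 \<le> (p+q) * \<bar>b\<bar>" using p q by (intro mult_left_mono) auto
  also have "\<dots> = \<bar>(p+q)*b\<bar>" using p q by (simp add: abs_mult)
  also have "\<dots> = \<bar>2*a\<bar>" using e by simp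
  also have "\<dots> = 2*\<bar>a\<bar>" by (simp add: abs_mult)
  finally have s: "p + q \<le> 4" using a by simp
  have "even ((p+q)*b)" using e by (metis dvd_minus_iff dvd_triv_left)
  hence "even (p+q)" using b by simp
  with s p q have "p + q = 2 \<or> p + q = 4" by presburger
  thus ?thesis using p q by auto
next
  case False
  with c have "c \<ge> 2 \<or> c \<le> -2" by presburger
  hence c2: "\<bar>c\<bar> \<ge> 2" by linarith
  have "p*q*2 \<le> p*q*\<bar>c\<bar>" using c2 p q by (intro mult_left_mono) auto
  also have "\<dots> = \<bar>p*q*c\<bar>" using p q by (simp add: abs_mult)
  finally have "p*q \<le> p + q" using I by simp
  hence "(p-1)*(q-1) \<le> 1" by (simp add: algebra_simps)
  hence pq: "p = 1 \<or> q = 1 \<or> (p = 2 \<and> q = 2)"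
  proof -
    assume h: "(p-1)*(q-1) \<le> 1"
    { assume "p \<ge> 2" "q \<ge> 2"
      hence "(p-1)*(q-1) \<ge> 1*1" by (intro mult_mono) auto
      have "p - 1 = 1 \<and> q - 1 = 1"
      proof (rule ccontr)
        assume "\<not> (p - 1 = 1 \<and> q - 1 = 1)"
        hence "p - 1 \<ge> 2 \<or> q - 1 \<ge> 2" using \<open>p \<ge> 2\<close> \<open>q \<ge> 2\<close> by linarith
        hence "(p-1)*(q-1) \<ge> 2"
        proof
          assume "p - 1 \<ge> 2" thus ?thesis using \<open>q \<ge> 2\<close> mult_mono[of 2 "p-1" 1 "q-1"] by simp
        next
          assume "q - 1 \<ge> 2" thus ?thesis using \<open>p \<ge> 2\<close> mult_mono[of 1 "p-1" 2 "q-1"] by simp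
        qed
        thus False using h by simp
      qed }
    thus ?thesis using p q by force
  qed
  have c1: "(p=1\<and>q=1) \<or> (p=1\<and>q=3) \<or> (p=3\<and>q=1) \<or> (p=2\<and>q=2) \<or> p \<noteq> 1"
    by (rule arith_core[OF p q a b c G I C])
  have G': "4*a + 2*(q+p)*b + q*p*c = 0" using G by (simp add: algebra_simps)
  have I': "\<bar>q*p*c\<bar> \<le> 2*(q+p)" using I by (simp add: algebra_simps)
  have c2: "(q=1\<and>p=1) \<or> (q=1\<and>p=3) \<or> (q=3\<and>p=1) \<or> (q=2\<and>p=2) \<or> q \<noteq> 1"
    by (rule arith_core[OF q p a b c G' I' R])
  show ?thesis using pq c1 c2 by auto
qed



fun sg :: "'a cet \<Rightarrow> int" where
  "sg (Sym a) = 1" | "sg (Hat a) = -1"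

lemma sg_comp: "sg (comp x) = - sg x" by (cases x) auto

definition Wt :: "'a tile \<Rightarrow> int" where "Wt t = (\<Sum>x\<in>#t. sg x)"

lemma Wt_empty[simp]: "Wt {#} = 0" by (simp add: Wt_def)
lemma Wt_single[simp]: "Wt {#x#} = sg x" by (simp add: Wt_def)
lemma Wt_add[simp]: "Wt (s + t) = Wt s + Wt t" by (simp add: Wt_def)
lemma Wt_sum: "Wt (sum f A) = (\<Sum>a\<in>A. Wt (f a))"
  by (induction A rule: infinite_finite_induct) auto

lemma Wt_size: "\<bar>Wt t\<bar> \<le> int (size t) \<and> even (Wt t + int (size t))"
proof (induction t)
  case empty then show ?case by simp
next
  case (add x t)
  have "Wt (add_mset x t) = sg x + Wt t" by (metis Wt_add Wt_single add_mset_add_single add.commute)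
  moreover have "sg x = 1 \<or> sg x = -1" by (cases x) auto
  ultimately show ?case using add by auto
qed

lemma cut_sum:
  assumes ad: "assembly_design E lam" and fE: "finite E" and fU: "finite U"
  shows "(\<Sum>v\<in>U. Wt (tile_at E id lam v)) =
         (\<Sum>e\<in>E. (of_bool (fst e \<in> U) - of_bool (snd e \<in> U)) * sg (lam (e,False)))"
proof -
  have "(\<Sum>v\<in>U. Wt (tile_at E id lam v)) =
        (\<Sum>v\<in>U. \<Sum>e\<in>E. (if fst e = v then sg (lam (e,False)) else 0) + (if snd e = v then - sg (lam (e,False)) else 0))"
  proof (rule sum.cong[OF refl])
    fix v
    show "Wt (tile_at E id lam v) = (\<Sum>e\<in>E. (if fst e = v then sg (lam (e,False)) else 0) + (if snd e = v then - sg (lam (e,False)) else 0))"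
      unfolding tile_at_def Wt_sum
    proof (rule sum.cong[OF refl])
      fix e assume "e \<in> E"
      hence "lam (e,True) = comp (lam (e,False))" using ad unfolding assembly_design_def by auto
      thus "Wt ((if fst (id e) = v then {#lam (e, False)#} else {#}) + (if snd (id e) = v then {#lam (e, True)#} else {#})) =
         (if fst e = v then sg (lam (e,False)) else 0) + (if snd e = v then - sg (lam (e,False)) else 0)"
        by (simp add: sg_comp)
    qed
  qed
  also have "\<dots> = (\<Sum>e\<in>E. \<Sum>v\<in>U. (if fst e = v then sg (lam (e,False)) else 0) + (if snd e = v then - sg (lam (e,False)) else 0))"
    by (rule sum.swap)
  also have "\<dots> = (\<Sum>e\<in>E. (of_bool (fst e \<in> U) - of_bool (snd e \<in> U)) * sg (lam (e,False)))"
    using fU by (intro sum.cong refl) (auto simp: sum.distrib)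
  finally show ?thesis .
qed

lemma cut_bound:
  assumes ad: "assembly_design E lam" and fE: "finite E" and fU: "finite U"
  shows "\<bar>\<Sum>v\<in>U. Wt (tile_at E id lam v)\<bar> \<le> int (card {e\<in>E. (fst e \<in> U) \<noteq> (snd e \<in> U)})"
proof -
  let ?C = "{e\<in>E. (fst e \<in> U) \<noteq> (snd e \<in> U)}"
  let ?g = "\<lambda>e. (of_bool (fst e \<in> U) - of_bool (snd e \<in> U)) * sg (lam (e,False))"
  have eq: "(\<Sum>e\<in>E. ?g e) = (\<Sum>e\<in>?C. ?g e)"
  proof (rule sum.mono_neutral_right)
    show "finite E" by (rule fE)
    show "?C \<subseteq> E" by auto
    show "\<forall>e\<in>E - ?C. ?g e = 0"
    proof
      fix e assume "e \<in> E - ?C"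
      hence "(fst e \<in> U) = (snd e \<in> U)" by auto
      thus "?g e = 0" by simp
    qed
  qed
  have "\<bar>\<Sum>e\<in>?C. ?g e\<bar> \<le> (\<Sum>e\<in>?C. \<bar>?g e\<bar>)" by (rule sum_abs)
  also have "\<dots> \<le> (\<Sum>e\<in>?C. 1)"
  proof (rule sum_mono)
    fix e
    have "sg (lam (e,False)) = 1 \<or> sg (lam (e,False)) = -1" by (cases "lam (e,False)") auto
    thus "\<bar>?g e\<bar> \<le> 1" by auto
  qed
  finally show ?thesis using cut_sum[OF assms] eq by simp
qed



definition bd :: "nat \<Rightarrow> nat \<Rightarrow> bool" where "bd m i \<longleftrightarrow> i = 0 \<or> i = m - 1"

lemma size_tile_grid:
  assumes "i < m" "j < n" "m > 2" "n > 2"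
  shows "size (tile_at (grid_E m n) id lam (i,j)) =
         4 - (if bd m i then 1 else 0) - (if bd n j then 1 else 0)"
  unfolding tile_grid bd_def using assms by auto

lemma sum_bd:
  assumes "n \<ge> 2"
  shows "(\<Sum>j\<in>{0..<n}. if bd n j then x else y) = 2*x + (int n - 2) * (y::int)"
proof -
  have split: "{0..<n} = {0, n-1} \<union> {1..<n-1}" using assms by auto
  have disj: "{0, n-1} \<inter> {1..<n-1} = {}" by auto
  have "(\<Sum>j\<in>{0..<n}. if bd n j then x else y) =
        (\<Sum>j\<in>{0, n-1}. if bd n j then x else y) + (\<Sum>j\<in>{1..<n-1}. if bd n j then x else y)"
    unfolding split by (rule sum.union_disjoint) (use disj in auto)
  also have "(\<Sum>j\<in>{0, n-1}. if bd n j then x else y) = 2*x"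
    using assms by (simp add: bd_def)
  also have "(\<Sum>j\<in>{1..<n-1}. if bd n j then x else y) = (\<Sum>j\<in>{1..<n-1}. y)"
    by (rule sum.cong) (auto simp: bd_def)
  also have "\<dots> = (int n - 2) * y" using assms by (simp add: of_nat_diff)
  finally show ?thesis .
qed



lemma lower:
  fixes P :: "nat tile set"
  assumes m: "m > 2" and n: "n > 2" and pot: "pot P" and re: "realizes P (grid_V m n) (grid_E m n) id"
    and cP: "card P \<le> 3"
  shows "(int m - 2 = 1 \<and> int n - 2 = 1) \<or> (int m - 2 = 1 \<and> int n - 2 = 3) \<or>
         (int m - 2 = 3 \<and> int n - 2 = 1) \<or> (int m - 2 = 2 \<and> int n - 2 = 2)"
proof -
  obtain lam where ad: "assembly_design (grid_E m n) lam"
    and sub: "pot_of_design (grid_V m n) (grid_E m n) id lam \<subseteq> P"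
    using re unfolding realizes_def by auto
  define t where "t = (\<lambda>v. tile_at (grid_E m n) id lam v)"
  have tP: "t (i,j) \<in> P" if "i < m" "j < n" for i j
    using sub that unfolding pot_of_design_def grid_V_def t_def by auto
  have st: "size (t (i,j)) = 4 - (if bd m i then 1 else 0) - (if bd n j then 1 else 0)"
    if "i < m" "j < n" for i j
    unfolding t_def by (rule size_tile_grid[OF that m n])
  define T2 where "T2 = t (0,0)"
  define T3 where "T3 = t (0,1)"
  define T4 where "T4 = t (1,1)"
  have s2: "size T2 = 2" unfolding T2_def using st[of 0 0] m n by (auto simp: bd_def split: if_splits)
  have s3: "size T3 = 3" unfolding T3_def using st[of 0 1] m n by (auto simp: bd_def split: if_splits)
  have s4: "size T4 = 4" unfolding T4_def using st[of 1 1] m n by (auto simp: bd_def split: if_splits)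
  have sub3: "{T2,T3,T4} \<subseteq> P" unfolding T2_def T3_def T4_def using tP m n by auto
  have c3: "card {T2,T3,T4} = 3" using s2 s3 s4 by (auto simp: card_insert_if)
  have fP: "finite P" using pot unfolding pot_def by auto
  have Peq: "P = {T2,T3,T4}"
    using card_subset_eq[OF fP sub3] c3 cP card_mono[OF fP sub3] by auto
  have tcl: "t (i,j) = (if bd m i then (if bd n j then T2 else T3) else (if bd n j then T3 else T4))"
    if "i < m" "j < n" for i j
  proof -
    have "t (i,j) \<in> {T2,T3,T4}" using tP[OF that] Peq by simp
    thus ?thesis using st[OF that] s2 s3 s4 by (auto split: if_splits)
  qed
  define a where "a = Wt T2"
  define b where "b = Wt T3"
  define c where "c = Wt T4"
  have f: "Wt (t (i,j)) = (if bd m i then (if bd n j then a else b) else (if bd n j then b else c))"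
    if "i < m" "j < n" for i j
    using tcl[OF that] unfolding a_def b_def c_def by auto
  have fE: "finite (grid_E m n)" by (rule grid_E_finite)
  have G0: "(\<Sum>v\<in>{0..<m}\<times>{0..<n}. Wt (t v)) = 0"
  proof -
    have emp: "{e\<in>grid_E m n. (fst e \<in> {0..<m}\<times>{0..<n}) \<noteq> (snd e \<in> {0..<m}\<times>{0..<n})} = {}"
      unfolding grid_E_def grid_V_def by auto
    have cb: "\<bar>\<Sum>v\<in>{0..<m}\<times>{0..<n}. Wt (t v)\<bar> \<le> int (card {e\<in>grid_E m n. (fst e \<in> {0..<m}\<times>{0..<n}) \<noteq> (snd e \<in> {0..<m}\<times>{0..<n})})"
      unfolding t_def by (rule cut_bound[OF ad fE]) simp
    show ?thesis using cb unfolding emp by simp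
  qed
  have "(\<Sum>v\<in>{0..<m}\<times>{0..<n}. Wt (t v)) = (\<Sum>i\<in>{0..<m}. \<Sum>j\<in>{0..<n}. Wt (t (i,j)))"
    by (simp add: sum.cartesian_product)
  also have "\<dots> = (\<Sum>i\<in>{0..<m}. if bd m i then 2*a + (int n - 2)*b else 2*b + (int n - 2)*c)"
  proof (rule sum.cong[OF refl])
    fix i assume i: "i \<in> {0..<m}"
    have "(\<Sum>j\<in>{0..<n}. Wt (t (i,j))) =
          (\<Sum>j\<in>{0..<n}. if bd n j then (if bd m i then a else b) else (if bd m i then b else c))"
      by (rule sum.cong[OF refl]) (use f i in auto)
    also have "\<dots> = 2*(if bd m i then a else b) + (int n - 2) * (if bd m i then b else c)"
      by (rule sum_bd) (use n in auto)
    finally show "(\<Sum>j\<in>{0..<n}. Wt (t (i,j))) = (if bd m i then 2*a + (int n - 2)*b else 2*b + (int n - 2)*c)"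
      by simp
  qed
  also have "\<dots> = 2*(2*a + (int n - 2)*b) + (int m - 2)*(2*b + (int n - 2)*c)"
    by (rule sum_bd) (use m in auto)
  finally have G: "4*a + 2*((int m - 2)+(int n - 2))*b + (int m - 2)*(int n - 2)*c = 0"
    using G0 by (simp add: algebra_simps)
  let ?U = "{1..<m-1}\<times>{1..<n-1}"
  have Isum: "(\<Sum>v\<in>?U. Wt (t v)) = (int m - 2)*(int n - 2)*c"
  proof -
    have "(\<Sum>v\<in>?U. Wt (t v)) = (\<Sum>v\<in>?U. c)"
      by (rule sum.cong[OF refl]) (use f in \<open>auto simp: bd_def\<close>)
    also have "\<dots> = (int m - 2)*(int n - 2)*c" using m n by (simp add: of_nat_diff)
    finally show ?thesis .
  qed
  have Icut: "card {e\<in>grid_E m n. (fst e \<in> ?U) \<noteq> (snd e \<in> ?U)} \<le> 2*(m-2) + 2*(n-2)"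
  proof -
    let ?A = "(\<lambda>j. ((0,j),(1,j))) ` {1..<n-1} \<union> (\<lambda>j. ((m-2,j),(m-1,j))) ` {1..<n-1} \<union>
              ((\<lambda>i. ((i,0),(i,1))) ` {1..<m-1} \<union> (\<lambda>i. ((i,n-2),(i,n-1))) ` {1..<m-1})"
    have "{e\<in>grid_E m n. (fst e \<in> ?U) \<noteq> (snd e \<in> ?U)} \<subseteq> ?A"
    proof
      fix e assume e: "e \<in> {e\<in>grid_E m n. (fst e \<in> ?U) \<noteq> (snd e \<in> ?U)}"
      then obtain i j i' j' where ee: "e = ((i,j),(i',j'))" and
        h: "i < m" "j < n" "i' < m" "j' < n" "(i' = Suc i \<and> j' = j) \<or> (i' = i \<and> j' = Suc j)"
        and x: "((i,j) \<in> ?U) \<noteq> ((i',j') \<in> ?U)"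
        unfolding grid_E_def grid_V_def by auto
      from h(5) show "e \<in> ?A"
      proof
        assume v: "i' = Suc i \<and> j' = j"
        hence "i = 0 \<or> i = m - 2" "1 \<le> j" "j < n - 1" using x h m by auto
        thus ?thesis using v ee m by (auto simp: image_iff)
      next
        assume v: "i' = i \<and> j' = Suc j"
        hence "j = 0 \<or> j = n - 2" "1 \<le> i" "i < m - 1" using x h n by auto
        thus ?thesis using v ee n by (auto simp: image_iff)
      qed
    qed
    hence "card {e\<in>grid_E m n. (fst e \<in> ?U) \<noteq> (snd e \<in> ?U)} \<le> card ?A"
      by (intro card_mono) auto
    also have "card ?A \<le> (n-2) + (n-2) + ((m-2) + (m-2))"
      by (intro card_Un_le[THEN order_trans] add_mono card_image_le[THEN order_trans]) auto
    finally show ?thesis by simp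
  qed
  have I: "\<bar>(int m - 2)*(int n - 2)*c\<bar> \<le> 2*((int m - 2)+(int n - 2))"
  proof -
    have "\<bar>(int m - 2)*(int n - 2)*c\<bar> \<le> int (card {e\<in>grid_E m n. (fst e \<in> ?U) \<noteq> (snd e \<in> ?U)})"
      using cut_bound[OF ad fE, of ?U] Isum unfolding t_def by simp
    also have "\<dots> \<le> int (2*(m-2) + 2*(n-2))" using Icut by linarith
    finally show ?thesis using m n by (simp add: of_nat_diff)
  qed
  let ?Uc = "{0..<m}\<times>{0::nat}"
  have Csum: "(\<Sum>v\<in>?Uc. Wt (t v)) = 2*a + (int m - 2)*b"
  proof -
    have "?Uc = (\<lambda>i. (i,0)) ` {0..<m}" by auto
    hence "(\<Sum>v\<in>?Uc. Wt (t v)) = (\<Sum>i\<in>{0..<m}. Wt (t (i,0)))"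
      by (simp add: sum.reindex inj_on_def)
    also have "\<dots> = (\<Sum>i\<in>{0..<m}. if bd m i then a else b)"
      by (rule sum.cong[OF refl]) (use f n in \<open>auto simp: bd_def\<close>)
    also have "\<dots> = 2*a + (int m - 2)*b" by (rule sum_bd) (use m in auto)
    finally show ?thesis .
  qed
  have Ccut: "card {e\<in>grid_E m n. (fst e \<in> ?Uc) \<noteq> (snd e \<in> ?Uc)} \<le> m"
  proof -
    have "{e\<in>grid_E m n. (fst e \<in> ?Uc) \<noteq> (snd e \<in> ?Uc)} \<subseteq> (\<lambda>i. ((i,0),(i,1))) ` {0..<m}"
      unfolding grid_E_def grid_V_def by auto
    hence "card {e\<in>grid_E m n. (fst e \<in> ?Uc) \<noteq> (snd e \<in> ?Uc)} \<le> card ((\<lambda>i. ((i,0::nat),(i,1::nat))) ` {0..<m})"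
      by (intro card_mono) auto
    also have "\<dots> \<le> m" using card_image_le[of "{0..<m}" "\<lambda>i. ((i,0::nat),(i,1::nat))"] by simp
    finally show ?thesis .
  qed
  have C: "\<bar>2*a + (int m - 2)*b\<bar> \<le> (int m - 2) + 2"
    using cut_bound[OF ad fE, of ?Uc] Csum Ccut unfolding t_def by simp
  let ?Ur = "{0::nat}\<times>{0..<n}"
  have Rsum: "(\<Sum>v\<in>?Ur. Wt (t v)) = 2*a + (int n - 2)*b"
  proof -
    have "?Ur = (\<lambda>j. (0,j)) ` {0..<n}" by auto
    hence "(\<Sum>v\<in>?Ur. Wt (t v)) = (\<Sum>j\<in>{0..<n}. Wt (t (0,j)))"
      by (simp add: sum.reindex inj_on_def)
    also have "\<dots> = (\<Sum>j\<in>{0..<n}. if bd n j then a else b)"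
      by (rule sum.cong[OF refl]) (use f m in \<open>auto simp: bd_def\<close>)
    also have "\<dots> = 2*a + (int n - 2)*b" by (rule sum_bd) (use n in auto)
    finally show ?thesis .
  qed
  have Rcut: "card {e\<in>grid_E m n. (fst e \<in> ?Ur) \<noteq> (snd e \<in> ?Ur)} \<le> n"
  proof -
    have "{e\<in>grid_E m n. (fst e \<in> ?Ur) \<noteq> (snd e \<in> ?Ur)} \<subseteq> (\<lambda>j. ((0,j),(1,j))) ` {0..<n}"
      unfolding grid_E_def grid_V_def by auto
    hence "card {e\<in>grid_E m n. (fst e \<in> ?Ur) \<noteq> (snd e \<in> ?Ur)} \<le> card ((\<lambda>j. ((0::nat,j),(1::nat,j))) ` {0..<n})"
      by (intro card_mono) auto
    also have "\<dots> \<le> n" using card_image_le[of "{0..<n}" "\<lambda>j. ((0::nat,j),(1::nat,j))"] by simp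
    finally show ?thesis .
  qed
  have R: "\<bar>2*a + (int n - 2)*b\<bar> \<le> (int n - 2) + 2"
    using cut_bound[OF ad fE, of ?Ur] Rsum Rcut unfolding t_def by simp
  have ab: "\<bar>a\<bar> \<le> 2" using Wt_size[of T2] s2 unfolding a_def by simp
  have bo: "odd b" using Wt_size[of T3] s3 unfolding b_def by simp
  have ce: "even c" using Wt_size[of T4] s4 unfolding c_def by simp
  show ?thesis
    by (rule arith_main[OF _ _ ab bo ce G I C R]) (use m n in auto)
qed


theorem proposition5:
  fixes m n :: nat
  assumes "m > 2" and "n > 2"
    and "{m, n} \<notin> {{3,3}, {3,5}, {4,4}}"
  shows "T1 (grid_V m n) (grid_E m n) id = 4"
  unfolding T1_def
proof (rule cInf_eq_minimum)
  show "4 \<in> {card P |P :: nat tile set. pot P \<and> realizes P (grid_V m n) (grid_E m n) id}"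
    using card_Pb pot_Pb upper[OF assms(1,2)] by force
next
  fix x assume "x \<in> {card P |P :: nat tile set. pot P \<and> realizes P (grid_V m n) (grid_E m n) id}"
  then obtain P :: "nat tile set" where x: "x = card P" and p: "pot P" and r: "realizes P (grid_V m n) (grid_E m n) id"
    by auto
  show "4 \<le> x"
  proof (rule ccontr)
    assume "\<not> 4 \<le> x"
    hence "card P \<le> 3" using x by simp
    from lower[OF assms(1,2) p r this]
    have "(m = 3 \<and> n = 3) \<or> (m = 3 \<and> n = 5) \<or> (m = 5 \<and> n = 3) \<or> (m = 4 \<and> n = 4)" by linarith
    thus False using assms(3) by (auto simp: insert_commute)
  qed
qed

end
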